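(* Let $\xi_{\{\mu\}},\xi_{\{\sigma\}}$ be global conformal Killing vector fields on $\mathbb{E}^2$ with parameters $\mu=(\mu_0,\mu_1,\mu_2)$ and $\sigma=(\sigma_0,\sigma_1,\sigma_2)$, and assume $\xi_{\{\mu\}}$ is not the zero vector field. Then: 1. $\xi_{\{\sigma\}}$ is everywhere orthogonal (with respect to $g_E$) to $\xi_{\{\mu\}}$ if and only if $\sigma=i\,r\,\mu$ for some $r\in\mathbb{R}$. 2. $\xi_{\{\sigma\}}$ commutes with $\xi_{\{\mu\}}$ if and only if $\sigma=c\,\mu$ for some $c\in\mathbb{C}$. Moreover, for every $c\in\mathbb{C}$ and every $p\in\mathbb{E}^2$, $g_E(\xi_{\{c\mu\}},\xi_{\{c\mu\}})|_p=|c|^2\,g_E(\xi_{\{\mu\}},\xi_{\{\mu\}})|_p$.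
   Context: $\mathbb{E}^2$ is the Euclidean plane with Cartesian coordinates $\{x,y\}$ and metric $g_E=dx^2+dy^2$; set $z=\frac12(x-iy)$, so $g_E=4\,dz\,d\bar z$. For $\mu=(\mu_0,\mu_1,\mu_2)\in\mathbb{C}^3$ the global conformal Killing vector (GCKV) with parameters $\mu$ is $\xi_{\{\mu\}}=(\mu_0+\mu_1z+\frac12\mu_2z^2)\partial_z+(\bar\mu_0+\bar\mu_1\bar z+\frac12\bar\mu_2\bar z^2)\partial_{\bar z}$; these are exactly the conformal Killing vectors of $g_E$ that extend smoothly to the Riemann sphere. *)

theory Defs
  imports "HOL-Analysis.Analysis"
begin

text \<open>Points of the Euclidean plane are pairs (x,y) :: real \<times> real; the metric g_E = dx^2+dy^2
  is the standard inner product on real \<times> real.  Vector fields are maps from points to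
  their Cartesian components (X^x, X^y).\<close>

type_synonym point = "real \<times> real"
type_synonym vfield = "point \<Rightarrow> real \<times> real"
type_synonym params = "complex \<times> complex \<times> complex"

definition zcoord :: "point \<Rightarrow> complex" where
  "zcoord p = Complex (fst p) (- snd p) / 2"

fun gckv_coeff :: "params \<Rightarrow> complex \<Rightarrow> complex" where
  "gckv_coeff (m0, m1, m2) z = m0 + m1 * z + m2 * z^2 / 2"

text \<open>Since x = z + conj z and y = i (z - conj z), one has partial_z = partial_x + i partial_y and
  partial_zbar = partial_x - i partial_y, so
  f partial_z + conj f partial_zbar = 2 Re f partial_x - 2 Im f partial_y.\<close>
definition gckv :: "params \<Rightarrow> vfield" where
  "gckv mu p = (let f = gckv_coeff mu (zcoord p) in (2 * Re f, - 2 * Im f))"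

definition gE :: "vfield \<Rightarrow> vfield \<Rightarrow> point \<Rightarrow> real" where
  "gE X Y p = inner (X p) (Y p)"

definition lie_bracket :: "vfield \<Rightarrow> vfield \<Rightarrow> vfield" where
  "lie_bracket X Y p = frechet_derivative Y (at p) (X p) - frechet_derivative X (at p) (Y p)"

fun scale_params :: "complex \<Rightarrow> params \<Rightarrow> params" where
  "scale_params c (m0, m1, m2) = (c * m0, c * m1, c * m2)"

end

theory Submission
  imports Defs
begin


lemma H_formula:
  fixes s0 s1 s2 m0 m1 m2 :: complex and x y :: real
  shows "Re (gckv_coeff (s0,s1,s2) (Complex x y) * cnj (gckv_coeff (m0,m1,m2) (Complex x y))) =
     Re (s0 * cnj m0) + Re (s1 * cnj m1) * (x^2+y^2) + Re (s2 * cnj m2) * (x^2+y^2)^2 / 4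
     + Re (s0 * cnj m1 + cnj s1 * m0) * x + Im (s0 * cnj m1 + cnj s1 * m0) * y
     + (Re (s0 * cnj m2 + cnj s2 * m0) * (x^2-y^2) + 2 * Im (s0 * cnj m2 + cnj s2 * m0) * x * y) / 2
     + (x^2+y^2) * (Re (s1 * cnj m2 + cnj s2 * m1) * x + Im (s1 * cnj m2 + cnj s2 * m1) * y) / 2"
  by (simp add: power2_eq_square field_simps)

lemma lin9:
  fixes E0 E1 E2 u1 v1 u2 v2 u3 v3 :: real
  assumes h: "\<And>x y. E0 + E1 * (x^2+y^2) + E2 * (x^2+y^2)^2 / 4 + u1 * x + v1 * y
     + (u2 * (x^2-y^2) + 2 * v2 * x * y) / 2 + (x^2+y^2) * (u3 * x + v3 * y) / 2 = 0"
  shows "E0 = 0 \<and> E1 = 0 \<and> E2 = 0 \<and> u1 = 0 \<and> v1 = 0 \<and> u2 = 0 \<and> v2 = 0 \<and> u3 = 0 \<and> v3 = 0"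
proof -
  note e0 = h[of 0 0] and e1 = h[of 1 0] and e2 = h[of "-1" 0] and e3 = h[of 0 1] and e4 = h[of 0 "-1"]
   and e5 = h[of 2 0] and e6 = h[of "-2" 0] and e7 = h[of 0 2] and e8 = h[of 0 "-2"] and e9 = h[of 1 1] and e10 = h[of 1 "-1"]
  note es = e0 e1 e2 e3 e4 e5 e6 e7 e8 e9 e10
  note es2 = es[simplified power2_eq_square, simplified]
  have "E0 = 0" "E2 = 0" "u1 = 0" "u3 = 0" "v1 = 0" "v3 = 0" using es2 by linarith+
  moreover have "E1 = 0" "u2 = 0" using es2 calculation by linarith+
  moreover have "v2 = 0" using es2(10) calculation by simp
  ultimately show ?thesis by blast
qed


lemma pivot:
  fixes sk sj sl mk mj ml :: complex
  assumes "mk \<noteq> 0" "Re (sk * cnj mk) = 0" "sj * cnj mk + cnj sk * mj = 0" "sl * cnj mk + cnj sk * ml = 0"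
  shows "\<exists>r::real. sk = \<i> * of_real r * mk \<and> sj = \<i> * of_real r * mj \<and> sl = \<i> * of_real r * ml"
proof -
  define r where "r = Im (sk * cnj mk) / (cmod mk)^2"
  have n: "(of_real ((cmod mk)^2) :: complex) = mk * cnj mk" by (rule complex_norm_square)
  have n0: "mk * cnj mk \<noteq> 0" using assms(1) by simp
  have a: "sk * cnj mk = \<i> * of_real (Im (sk * cnj mk))" using assms(2) by (simp add: complex_eq_iff)
  have k: "sk = \<i> * of_real r * mk"
  proof -
    have "sk * (mk * cnj mk) = \<i> * of_real (Im (sk * cnj mk)) * mk" using a by (metis mult.assoc mult.commute)
    then show ?thesis using n0 unfolding r_def of_real_divide n[symmetric]
      by (simp add: field_simps)
  qed
  have cj: "cnj sk = - \<i> * of_real r * cnj mk" using k by simp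
  have j: "sj = \<i> * of_real r * mj"
  proof -
    have "sj * cnj mk = \<i> * of_real r * mj * cnj mk" using assms(3) cj by (simp add: algebra_simps eq_neg_iff_add_eq_0[symmetric])
    then show ?thesis using assms(1) by simp
  qed
  have l: "sl = \<i> * of_real r * ml"
  proof -
    have "sl * cnj mk = \<i> * of_real r * ml * cnj mk" using assms(4) cj by (simp add: algebra_simps eq_neg_iff_add_eq_0[symmetric])
    then show ?thesis using assms(1) by simp
  qed
  show ?thesis using k j l by blast
qed

lemma zcoord_alt: "zcoord p = (of_real (fst p) - \<i> * of_real (snd p)) / 2"
  by (simp add: zcoord_def Complex_eq)

lemma zsurj: "zcoord (2 * Re z, - 2 * Im z) = z"
  by (simp add: zcoord_def complex_eq_iff)

lemma zcoord_gckv: "zcoord (gckv a p) = gckv_coeff a (zcoord p)"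
  by (simp add: gckv_def Let_def zcoord_def complex_eq_iff)

lemma gckv_der:
  fixes m0 m1 m2 :: complex
  shows "(gckv (m0,m1,m2) has_derivative
     (\<lambda>v. (2 * Re ((m1 + m2 * zcoord p) * zcoord v), - 2 * Im ((m1 + m2 * zcoord p) * zcoord v)))) (at p)"
proof -
  have e: "gckv (m0,m1,m2) = (\<lambda>p. (2 * Re (m0 + m1 * ((of_real (fst p) - \<i> * of_real (snd p)) / 2) + m2 * ((of_real (fst p) - \<i> * of_real (snd p)) / 2)^2/2),
      - 2 * Im (m0 + m1 * ((of_real (fst p) - \<i> * of_real (snd p)) / 2) + m2 * ((of_real (fst p) - \<i> * of_real (snd p)) / 2)^2/2)))"
    by (auto simp: gckv_def zcoord_alt Let_def)
  show ?thesis unfolding e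
    apply (rule has_derivative_eq_rhs)
     apply (intro derivative_eq_intros bounded_linear.has_derivative[OF bounded_linear_Re] bounded_linear.has_derivative[OF bounded_linear_Im])
                    apply (auto simp: zcoord_alt)
    apply (auto simp: fun_eq_iff field_simps)
    done
qed

lemma bracket_formula:
  fixes s0 s1 s2 m0 m1 m2 :: complex and p :: point
  defines "W \<equiv> (m1 + m2 * zcoord p) * gckv_coeff (s0,s1,s2) (zcoord p) - (s1 + s2 * zcoord p) * gckv_coeff (m0,m1,m2) (zcoord p)"
  shows "lie_bracket (gckv (s0,s1,s2)) (gckv (m0,m1,m2)) p = (2 * Re W, - 2 * Im W)"
  unfolding lie_bracket_def frechet_derivative_at[OF gckv_der, symmetric] W_def zcoord_gckv
  by (simp add: algebra_simps)

lemma W_formula: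
  fixes s0 s1 s2 m0 m1 m2 z :: complex
  shows "(m1 + m2 * z) * gckv_coeff (s0,s1,s2) z - (s1 + s2 * z) * gckv_coeff (m0,m1,m2) z
     = (s0 * m1 - m0 * s1) + (s0 * m2 - m0 * s2) * z + (s1 * m2 - m1 * s2) * z^2 / 2"
  by (simp add: field_simps power2_eq_square)

lemma pair_zero: "(2 * Re w, - 2 * Im w) = (0::real\<times>real) \<Longrightarrow> w = 0"
  by (simp add: zero_prod_def complex_eq_iff)

lemma XY_zero: "X + Y = 0 \<Longrightarrow> - X + Y = (0::complex) \<Longrightarrow> X = 0"
proof -
  assume a: "X + Y = 0" "- X + Y = 0"
  have "2 * X = (X + Y) - (- X + Y)" by simp
  then show "X = 0" using a by simp
qed

lemma gE_formula: "gE (gckv a) (gckv b) p = 4 * Re (gckv_coeff a (zcoord p) * cnj (gckv_coeff b (zcoord p)))"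
  by (simp add: gE_def gckv_def Let_def algebra_simps)

lemma coeff_scale: "gckv_coeff (scale_params c mu) z = c * gckv_coeff mu z"
  by (cases mu) (simp add: algebra_simps)

lemma Re_mult_cnj: "Re (w * cnj w) = (cmod w)^2"
  by (simp add: complex_mult_cnj cmod_def)

lemma dep:
  fixes a0 a1 a2 b0 b1 b2 :: complex
  assumes "b0 \<noteq> 0 \<or> b1 \<noteq> 0 \<or> b2 \<noteq> 0" "a0 * b1 = b0 * a1" "a0 * b2 = b0 * a2" "a1 * b2 = b1 * a2"
  shows "\<exists>c. a0 = c * b0 \<and> a1 = c * b1 \<and> a2 = c * b2"
proof -
  consider "b0 \<noteq> 0" | "b1 \<noteq> 0" | "b2 \<noteq> 0" using assms(1) by blast
  then show ?thesis
  proof cases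
    case 1 then show ?thesis using assms by (intro exI[of _ "a0/b0"]) (auto simp: field_simps)
  next
    case 2 then show ?thesis using assms by (intro exI[of _ "a1/b1"]) (auto simp: field_simps)
  next
    case 3 then show ?thesis using assms by (intro exI[of _ "a2/b2"]) (auto simp: field_simps)
  qed
qed

theorem lemma5p1:
  fixes mu sigma :: params
  assumes nonzero: "gckv mu \<noteq> (\<lambda>p. 0)"
  shows "((\<forall>p. gE (gckv sigma) (gckv mu) p = 0) \<longleftrightarrow>
            (\<exists>r::real. sigma = scale_params (\<i> * complex_of_real r) mu))
       \<and> ((\<forall>p. lie_bracket (gckv sigma) (gckv mu) p = 0) \<longleftrightarrow>
            (\<exists>c::complex. sigma = scale_params c mu))
       \<and> (\<forall>(c::complex) p. gE (gckv (scale_params c mu)) (gckv (scale_params c mu)) p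
              = (cmod c)^2 * gE (gckv mu) (gckv mu) p)"
proof -
  obtain m0 m1 m2 where mu: "mu = (m0,m1,m2)" by (cases mu) auto
  obtain s0 s1 s2 where sg: "sigma = (s0,s1,s2)" by (cases sigma) auto
  have nz: "m0 \<noteq> 0 \<or> m1 \<noteq> 0 \<or> m2 \<noteq> 0"
  proof (rule ccontr)
    assume "\<not> ?thesis"
    then have "gckv mu = (\<lambda>p. 0)" by (simp add: mu gckv_def fun_eq_iff zero_prod_def)
    then show False using nonzero by simp
  qed
  have P3: "\<forall>(c::complex) p. gE (gckv (scale_params c mu)) (gckv (scale_params c mu)) p
              = (cmod c)^2 * gE (gckv mu) (gckv mu) p"
  proof (intro allI)
    fix c :: complex and p :: point
    let ?F = "gckv_coeff mu (zcoord p)"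
    have "gE (gckv (scale_params c mu)) (gckv (scale_params c mu)) p = 4 * Re ((c * ?F) * cnj (c * ?F))"
      by (simp only: gE_formula coeff_scale)
    also have "\<dots> = 4 * (cmod (c * ?F))^2" by (simp only: Re_mult_cnj)
    also have "\<dots> = (cmod c)^2 * (4 * (cmod ?F)^2)" by (simp add: norm_mult power_mult_distrib)
    also have "\<dots> = (cmod c)^2 * gE (gckv mu) (gckv mu) p" by (simp only: gE_formula Re_mult_cnj)
    finally show "gE (gckv (scale_params c mu)) (gckv (scale_params c mu)) p = (cmod c)^2 * gE (gckv mu) (gckv mu) p" .
  qed
  have P1: "(\<forall>p. gE (gckv sigma) (gckv mu) p = 0) \<longleftrightarrow>
            (\<exists>r::real. sigma = scale_params (\<i> * complex_of_real r) mu)"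
  proof
    assume h: "\<forall>p. gE (gckv sigma) (gckv mu) p = 0"
    have "\<And>x y. Re (gckv_coeff (s0,s1,s2) (Complex x y) * cnj (gckv_coeff (m0,m1,m2) (Complex x y))) = 0"
    proof -
      fix x y
      show "Re (gckv_coeff (s0,s1,s2) (Complex x y) * cnj (gckv_coeff (m0,m1,m2) (Complex x y))) = 0"
        using h[rule_format, of "(2 * Re (Complex x y), - 2 * Im (Complex x y))"]
        unfolding gE_formula zsurj sg mu by simp
    qed
    note z9 = lin9[OF this[unfolded H_formula]]
    have D01: "s0 * cnj m1 + cnj s1 * m0 = 0" using z9 by (simp add: complex_eq_iff)
    have D02: "s0 * cnj m2 + cnj s2 * m0 = 0" using z9 by (simp add: complex_eq_iff)
    have D12: "s1 * cnj m2 + cnj s2 * m1 = 0" using z9 by (simp add: complex_eq_iff)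
    have C01: "s1 * cnj m0 + cnj s0 * m1 = 0"
    proof -
      have "cnj (s0 * cnj m1 + cnj s1 * m0) = 0" using D01 by simp
      then show ?thesis by (simp add: algebra_simps)
    qed
    have C02: "s2 * cnj m0 + cnj s0 * m2 = 0"
    proof -
      have "cnj (s0 * cnj m2 + cnj s2 * m0) = 0" using D02 by simp
      then show ?thesis by (simp add: algebra_simps)
    qed
    have C12: "s2 * cnj m1 + cnj s1 * m2 = 0"
    proof -
      have "cnj (s1 * cnj m2 + cnj s2 * m1) = 0" using D12 by simp
      then show ?thesis by (simp add: algebra_simps)
    qed
    have "\<exists>r::real. s0 = \<i> * of_real r * m0 \<and> s1 = \<i> * of_real r * m1 \<and> s2 = \<i> * of_real r * m2"
    proof -
      consider "m0 \<noteq> 0" | "m1 \<noteq> 0" | "m2 \<noteq> 0" using nz by blast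
      then show ?thesis
      proof cases
        case 1 show ?thesis using pivot[OF 1 _ C01 C02] z9 by blast
      next
        case 2 show ?thesis using pivot[OF 2 _ D01 C12] z9 by blast
      next
        case 3 show ?thesis using pivot[OF 3 _ D02 D12] z9 by blast
      qed
    qed
    then show "\<exists>r::real. sigma = scale_params (\<i> * complex_of_real r) mu"
      by (auto simp: sg mu)
  next
    assume "\<exists>r::real. sigma = scale_params (\<i> * complex_of_real r) mu"
    then obtain r where r: "sigma = scale_params (\<i> * complex_of_real r) mu" by blast
    show "\<forall>p. gE (gckv sigma) (gckv mu) p = 0"
      by (simp add: r gE_formula coeff_scale mult.assoc complex_mult_cnj)
  qed
  have P2: "(\<forall>p. lie_bracket (gckv sigma) (gckv mu) p = 0) \<longleftrightarrow>
            (\<exists>c::complex. sigma = scale_params c mu)"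
  proof
    assume h: "\<forall>p. lie_bracket (gckv sigma) (gckv mu) p = 0"
    have W0: "(s0 * m1 - m0 * s1) + (s0 * m2 - m0 * s2) * z + (s1 * m2 - m1 * s2) * z^2 / 2 = 0" for z
    proof -
      have "lie_bracket (gckv sigma) (gckv mu) (2 * Re z, - 2 * Im z) = 0" using h by blast
      then show ?thesis unfolding sg mu bracket_formula zsurj W_formula
        by (rule pair_zero)
    qed
    have a: "s0 * m1 - m0 * s1 = 0" using W0[of 0] by simp
    have w1: "(s0 * m2 - m0 * s2) + (s1 * m2 - m1 * s2) / 2 = 0" using W0[of 1] a by simp
    have w2: "- (s0 * m2 - m0 * s2) + (s1 * m2 - m1 * s2) / 2 = 0" using W0[of "-1"] a by simp
    have b: "s0 * m2 - m0 * s2 = 0" using XY_zero[OF w1 w2] .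
    have c: "s1 * m2 - m1 * s2 = 0" using W0[of 1] a b by simp
    obtain c where "s0 = c * m0 \<and> s1 = c * m1 \<and> s2 = c * m2"
      using dep[OF nz, of s0 s1 s2] a b c by (auto simp: algebra_simps)
    then show "\<exists>c::complex. sigma = scale_params c mu" by (auto simp: sg mu)
  next
    assume "\<exists>c::complex. sigma = scale_params c mu"
    then obtain c where c: "sigma = scale_params c mu" by blast
    show "\<forall>p. lie_bracket (gckv sigma) (gckv mu) p = 0"
      by (simp add: c mu bracket_formula algebra_simps zero_prod_def)
  qed
  show ?thesis using P1 P2 P3 by blast
qed

end
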